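(* Let $d\ge3$, let $C$ be a set of lines on ${\rm F}_d$ and put $C^s=C\cap\mathcal{L}^s$ for $s=0,1,2$. Then: (a) $C^0$ consists of pairwise disjoint lines if and only if $C^0=\{L^0_{a_1,b_1},\dots,L^0_{a_m,b_m}\}$ with $\#C^0=m$, $0\le a_1<\dots<a_m\le d-1$, and there is a permutation $\sigma$ of $R_d$ with $\sigma(a_i)=b_i$ for all $i$; (b) $C^1$ consists of pairwise disjoint lines if and only if $C^1=\{L^1_{a_1,b_1},\dots,L^1_{a_m,b_m}\}$ with $\#C^1=m$, $0\le b_1<\dots<b_m\le d-1$, and $\varphi_{d,+}$ restricted to $\{(a_i,b_i)\}_{i=1}^m$ is injective; (c) $C^2$ consists of pairwise disjoint lines if and only if $C^2=\{L^2_{a_1,b_1},\dots,L^2_{a_m,b_m}\}$ with $\#C^2=m$, $0\le b_1<\dots<b_m\le d-1$, and $\varphi_{d,+}$ restricted to $\{(a_i,b_i)\}_{i=1}^m$ is injective.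
   Context: ${\rm F}_d\subset\mathbb{P}^3(\mathbb{C})$ is the surface $x^d-y^d-z^d+w^d=0$; $R_d=\{0,\dots,d-1\}$ and $r_d$ denotes remainder mod $d$. Fix a primitive $d$-th root of unity $\eta$ and $v\in\mathbb{C}$ with $v^d=-1$. For $k,i\in R_d$ define $L^0_{k,i}:\{y=\eta^i x,\ w=\eta^k z\}$, $L^1_{k,i}:\{x=\eta^{k+i}z,\ y=\eta^i w\}$, $L^2_{k,i}:\{x=v\eta^i w,\ y=v\eta^{k+i}z\}$, and $\mathcal{L}^s=\{L^s_{k,i}\}_{k,i\in R_d}$; these are all the lines on ${\rm F}_d$. Define $\varphi_{d,+}:R_d\times R_d\to R_d$ by $\varphi_{d,+}(k,i)=r_d(i+k)$. *)

theory Defs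
  imports Main "HOL.Complex"
begin

text \<open>Points of P^3(C) are represented by their nonzero homogeneous coordinate
vectors (x,y,z,w).  A line is represented by the set of all nonzero
coordinate vectors of its points (the punctured affine cone); two lines are
disjoint in P^3(C) iff these sets are disjoint.\<close>

type_synonym pt = "complex \<times> complex \<times> complex \<times> complex"

definition Fsurf :: "nat \<Rightarrow> pt set" where
  "Fsurf d = {(x,y,z,w). (x,y,z,w) \<noteq> (0,0,0,0) \<and> x^d - y^d - z^d + w^d = 0}"

text \<open>The lines L^s_{k,i} (eta a primitive d-th root of unity, v^d = -1).\<close>
definition line0 :: "complex \<Rightarrow> nat \<Rightarrow> nat \<Rightarrow> pt set" where
  "line0 \<eta> k i = {(x,y,z,w). (x,y,z,w) \<noteq> (0,0,0,0) \<and> y = \<eta>^i * x \<and> w = \<eta>^k * z}"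

definition line1 :: "complex \<Rightarrow> nat \<Rightarrow> nat \<Rightarrow> pt set" where
  "line1 \<eta> k i = {(x,y,z,w). (x,y,z,w) \<noteq> (0,0,0,0) \<and> x = \<eta>^(k+i) * z \<and> y = \<eta>^i * w}"

definition line2 :: "complex \<Rightarrow> complex \<Rightarrow> nat \<Rightarrow> nat \<Rightarrow> pt set" where
  "line2 \<eta> v k i = {(x,y,z,w). (x,y,z,w) \<noteq> (0,0,0,0) \<and> x = v * \<eta>^i * w \<and> y = v * \<eta>^(k+i) * z}"

definition fam0 :: "nat \<Rightarrow> complex \<Rightarrow> pt set set" where
  "fam0 d \<eta> = {line0 \<eta> k i | k i. k < d \<and> i < d}"

definition fam1 :: "nat \<Rightarrow> complex \<Rightarrow> pt set set" where
  "fam1 d \<eta> = {line1 \<eta> k i | k i. k < d \<and> i < d}"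

definition fam2 :: "nat \<Rightarrow> complex \<Rightarrow> complex \<Rightarrow> pt set set" where
  "fam2 d \<eta> v = {line2 \<eta> v k i | k i. k < d \<and> i < d}"

definition phi_plus :: "nat \<Rightarrow> nat \<times> nat \<Rightarrow> nat" where
  "phi_plus d p = (snd p + fst p) mod d"

end

theory Submission
  imports Defs
begin


lemma enum_nat:
  assumes "finite (K::nat set)"
  shows "\<exists>f. bij_betw f {..<card K} K \<and> (\<forall>i j. i<j \<and> j<card K \<longrightarrow> f i < f j)"
proof -
  let ?xs = "sorted_list_of_set K"
  have "bij_betw ((!) ?xs) {..<card K} K"
    by (rule bij_betw_nth) (use assms in auto)
  moreover have "\<forall>i j. i<j \<and> j<card K \<longrightarrow> ?xs ! i < ?xs ! j"
    using sorted_wrt_nth_less[OF strict_sorted_list_of_set[of K]] by auto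
  ultimately show ?thesis by blast
qed

lemma pow_eq_iff:
  fixes \<eta> :: complex
  assumes d: "d > 0" and e1: "\<eta> ^ d = 1" and prim: "\<forall>j. 0 < j \<and> j < d \<longrightarrow> \<eta> ^ j \<noteq> 1"
  shows "\<eta> ^ a = \<eta> ^ b \<longleftrightarrow> a mod d = b mod d"
proof -
  have red: "\<eta> ^ x = \<eta> ^ (x mod d)" for x
  proof -
    have "\<eta> ^ x = \<eta> ^ (d * (x div d) + x mod d)" by simp
    also have "\<dots> = (\<eta> ^ d) ^ (x div d) * \<eta> ^ (x mod d)" by (simp only: power_add power_mult)
    also have "\<dots> = \<eta> ^ (x mod d)" by (simp add: e1)
    finally show ?thesis .
  qed
  have nz: "\<eta> \<noteq> 0"
  proof
    assume "\<eta> = 0"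
    hence "\<eta> ^ d = 0" using d by simp
    with e1 show False by simp
  qed
  have lt: "\<eta> ^ x \<noteq> \<eta> ^ y" if "x < y" "y < d" for x y
  proof
    assume h: "\<eta> ^ x = \<eta> ^ y"
    have "\<eta> ^ y = \<eta> ^ x * \<eta> ^ (y - x)" using that by (simp add: power_add[symmetric])
    hence "\<eta> ^ (y - x) = 1" using h nz by simp
    with prim that show False by auto
  qed
  have "\<eta> ^ (a mod d) = \<eta> ^ (b mod d) \<longleftrightarrow> a mod d = b mod d"
  proof
    assume h: "\<eta> ^ (a mod d) = \<eta> ^ (b mod d)"
    show "a mod d = b mod d"
    proof (rule linorder_cases[of "a mod d" "b mod d"])
      assume "a mod d < b mod d" thus ?thesis using lt[of "a mod d" "b mod d"] h d by simp
    next
      assume "b mod d < a mod d" thus ?thesis using lt[of "b mod d" "a mod d"] h d by simp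
    qed
  qed simp
  thus ?thesis using red[of a] red[of b] by simp
qed

lemma disj0: "disjnt (line0 \<eta> k i) (line0 \<eta> k' i') \<longleftrightarrow> \<eta>^k \<noteq> \<eta>^k' \<and> \<eta>^i \<noteq> \<eta>^i'"
proof
  assume h: "disjnt (line0 \<eta> k i) (line0 \<eta> k' i')"
  show "\<eta>^k \<noteq> \<eta>^k' \<and> \<eta>^i \<noteq> \<eta>^i'"
  proof
    show "\<eta>^k \<noteq> \<eta>^k'"
    proof
      assume "\<eta>^k = \<eta>^k'"
      hence "(0,0,1,\<eta>^k) \<in> line0 \<eta> k i \<inter> line0 \<eta> k' i'" by (simp add: line0_def)
      with h show False by (auto simp: disjnt_def)
    qed
    show "\<eta>^i \<noteq> \<eta>^i'"
    proof
      assume "\<eta>^i = \<eta>^i'"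
      hence "(1,\<eta>^i,0,0) \<in> line0 \<eta> k i \<inter> line0 \<eta> k' i'" by (simp add: line0_def)
      with h show False by (auto simp: disjnt_def)
    qed
  qed
next
  assume h: "\<eta>^k \<noteq> \<eta>^k' \<and> \<eta>^i \<noteq> \<eta>^i'"
  show "disjnt (line0 \<eta> k i) (line0 \<eta> k' i')"
    unfolding disjnt_def
  proof (rule equals0I)
    fix p assume "p \<in> line0 \<eta> k i \<inter> line0 \<eta> k' i'"
    then obtain x y z w where p: "p = (x,y,z,w)" "(x,y,z,w) \<noteq> (0,0,0,0)"
      "y = \<eta>^i * x" "w = \<eta>^k * z" "y = \<eta>^i' * x" "w = \<eta>^k' * z"
      by (auto simp: line0_def)
    have "x = 0" using p h by (metis mult_cancel_right)
    moreover have "z = 0" using p h by (metis mult_cancel_right)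
    ultimately show False using p by simp
  qed
qed

lemma disj1: "disjnt (line1 \<eta> k i) (line1 \<eta> k' i') \<longleftrightarrow> \<eta>^(k+i) \<noteq> \<eta>^(k'+i') \<and> \<eta>^i \<noteq> \<eta>^i'"
proof
  assume h: "disjnt (line1 \<eta> k i) (line1 \<eta> k' i')"
  show "\<eta>^(k+i) \<noteq> \<eta>^(k'+i') \<and> \<eta>^i \<noteq> \<eta>^i'"
  proof
    show "\<eta>^(k+i) \<noteq> \<eta>^(k'+i')"
    proof
      assume "\<eta>^(k+i) = \<eta>^(k'+i')"
      hence "(\<eta>^(k+i),0,1,0) \<in> line1 \<eta> k i \<inter> line1 \<eta> k' i'" by (simp add: line1_def)
      with h show False by (auto simp: disjnt_def)
    qed
    show "\<eta>^i \<noteq> \<eta>^i'"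
    proof
      assume "\<eta>^i = \<eta>^i'"
      hence "(0,\<eta>^i,0,1) \<in> line1 \<eta> k i \<inter> line1 \<eta> k' i'" by (simp add: line1_def)
      with h show False by (auto simp: disjnt_def)
    qed
  qed
next
  assume h: "\<eta>^(k+i) \<noteq> \<eta>^(k'+i') \<and> \<eta>^i \<noteq> \<eta>^i'"
  show "disjnt (line1 \<eta> k i) (line1 \<eta> k' i')"
    unfolding disjnt_def
  proof (rule equals0I)
    fix p assume "p \<in> line1 \<eta> k i \<inter> line1 \<eta> k' i'"
    then obtain x y z w where p: "p = (x,y,z,w)" "(x,y,z,w) \<noteq> (0,0,0,0)"
      "x = \<eta>^(k+i) * z" "y = \<eta>^i * w" "x = \<eta>^(k'+i') * z" "y = \<eta>^i' * w"
      by (auto simp: line1_def)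
    have "z = 0" using p h by (metis mult_cancel_right)
    moreover have "w = 0" using p h by (metis mult_cancel_right)
    ultimately show False using p by simp
  qed
qed

lemma disj2:
  assumes v: "v \<noteq> 0"
  shows "disjnt (line2 \<eta> v k i) (line2 \<eta> v k' i') \<longleftrightarrow> \<eta>^(k+i) \<noteq> \<eta>^(k'+i') \<and> \<eta>^i \<noteq> \<eta>^i'"
proof
  assume h: "disjnt (line2 \<eta> v k i) (line2 \<eta> v k' i')"
  show "\<eta>^(k+i) \<noteq> \<eta>^(k'+i') \<and> \<eta>^i \<noteq> \<eta>^i'"
  proof
    show "\<eta>^(k+i) \<noteq> \<eta>^(k'+i')"
    proof
      assume "\<eta>^(k+i) = \<eta>^(k'+i')"
      hence "(0, v*\<eta>^(k+i),1,0) \<in> line2 \<eta> v k i \<inter> line2 \<eta> v k' i'" using v by (simp add: line2_def)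
      with h show False by (auto simp: disjnt_def)
    qed
    show "\<eta>^i \<noteq> \<eta>^i'"
    proof
      assume "\<eta>^i = \<eta>^i'"
      hence "(v*\<eta>^i,0,0,1) \<in> line2 \<eta> v k i \<inter> line2 \<eta> v k' i'" by (simp add: line2_def)
      with h show False by (auto simp: disjnt_def)
    qed
  qed
next
  assume h: "\<eta>^(k+i) \<noteq> \<eta>^(k'+i') \<and> \<eta>^i \<noteq> \<eta>^i'"
  show "disjnt (line2 \<eta> v k i) (line2 \<eta> v k' i')"
    unfolding disjnt_def
  proof (rule equals0I)
    fix p assume "p \<in> line2 \<eta> v k i \<inter> line2 \<eta> v k' i'"
    then obtain x y z w where p: "p = (x,y,z,w)" "(x,y,z,w) \<noteq> (0,0,0,0)"
      "x = v * \<eta>^i * w" "y = v * \<eta>^(k+i) * z" "x = v * \<eta>^i' * w" "y = v * \<eta>^(k'+i') * z"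
      by (auto simp: line2_def)
    have "w = 0" using p h v by (metis mult_cancel_right mult_cancel_left)
    moreover have "z = 0" using p h v by (metis mult_cancel_right mult_cancel_left)
    ultimately show False using p by simp
  qed
qed

lemma inj0: "line0 \<eta> k i = line0 \<eta> k' i' \<Longrightarrow> \<eta>^k = \<eta>^k' \<and> \<eta>^i = \<eta>^i'"
proof -
  assume h: "line0 \<eta> k i = line0 \<eta> k' i'"
  have "(0,0,1,\<eta>^k) \<in> line0 \<eta> k' i'" "(1,\<eta>^i,0,0) \<in> line0 \<eta> k' i'"
    unfolding h[symmetric] by (simp_all add: line0_def)
  hence "\<eta>^k = \<eta>^k' * 1" "\<eta>^i = \<eta>^i' * 1" unfolding line0_def by blast+
  thus ?thesis by simp
qed

lemma inj1: "line1 \<eta> k i = line1 \<eta> k' i' \<Longrightarrow> \<eta>^(k+i) = \<eta>^(k'+i') \<and> \<eta>^i = \<eta>^i'"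
proof -
  assume h: "line1 \<eta> k i = line1 \<eta> k' i'"
  have "(\<eta>^(k+i),0,1,0) \<in> line1 \<eta> k' i'" "(0,\<eta>^i,0,1) \<in> line1 \<eta> k' i'"
    unfolding h[symmetric] by (simp_all add: line1_def)
  hence "\<eta>^(k+i) = \<eta>^(k'+i') * 1" "\<eta>^i = \<eta>^i' * 1" unfolding line1_def by blast+
  thus ?thesis by simp
qed

lemma inj2: "v \<noteq> 0 \<Longrightarrow> line2 \<eta> v k i = line2 \<eta> v k' i' \<Longrightarrow> \<eta>^(k+i) = \<eta>^(k'+i') \<and> \<eta>^i = \<eta>^i'"
proof -
  assume v: "v \<noteq> 0" and h: "line2 \<eta> v k i = line2 \<eta> v k' i'"
  have "(0, v*\<eta>^(k+i),1,0) \<in> line2 \<eta> v k' i'" "(v*\<eta>^i,0,0,1) \<in> line2 \<eta> v k' i'"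
    using v unfolding h[symmetric] by (simp_all add: line2_def)
  hence "v*\<eta>^(k+i) = v*\<eta>^(k'+i') * 1" "v*\<eta>^i = v*\<eta>^i' * 1" unfolding line2_def by blast+
  thus ?thesis using v by simp
qed



lemma enum_gen:
  fixes L :: "nat \<Rightarrow> nat \<Rightarrow> 'a set" and P :: "nat \<Rightarrow> nat \<Rightarrow> nat"
  assumes sub: "S \<subseteq> {L k i | k i. k < d \<and> i < d}"
    and Pd: "\<And>k i k' i'. k<d \<Longrightarrow> i<d \<Longrightarrow> k'<d \<Longrightarrow> i'<d \<Longrightarrow> L k i \<in> S \<Longrightarrow> L k' i' \<in> S
             \<Longrightarrow> (k,i) \<noteq> (k',i') \<Longrightarrow> P k i \<noteq> P k' i'"
    and Linj: "\<And>k i k' i'. k<d \<Longrightarrow> i<d \<Longrightarrow> k'<d \<Longrightarrow> i'<d \<Longrightarrow> L k i = L k' i' \<Longrightarrow> k = k' \<and> i = i'"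
  shows "\<exists>m a b. S = (\<lambda>j. L (a j) (b j)) ` {..<m} \<and> card S = m
     \<and> (\<forall>i j. i<j \<and> j<m \<longrightarrow> P (a i) (b i) < P (a j) (b j)) \<and> (\<forall>j<m. a j < d \<and> b j < d)"
proof -
  define I where "I = {(k,i). k<d \<and> i<d \<and> L k i \<in> S}"
  have finI: "finite I"
    by (rule finite_subset[of _ "{..<d} \<times> {..<d}"]) (auto simp: I_def)
  have SI: "S = (\<lambda>(k,i). L k i) ` I"
    using sub by (auto simp: I_def)
  define P' where "P' = (\<lambda>(k,i). P k i)"
  have injP: "inj_on P' I"
  proof (rule inj_onI)
    fix p q assume h: "p \<in> I" "q \<in> I" "P' p = P' q"
    obtain k i k' i' where pq: "p = (k,i)" "q = (k',i')" by fastforce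
    show "p = q"
    proof (rule ccontr)
      assume "p \<noteq> q"
      hence "P k i \<noteq> P k' i'" using Pd[of k i k' i'] h pq by (simp add: I_def)
      thus False using h(3) pq by (simp add: P'_def)
    qed
  qed
  define K where "K = P' ` I"
  have finK: "finite K" using finI K_def by simp
  obtain f where f: "bij_betw f {..<card K} K" "\<forall>i j. i<j \<and> j<card K \<longrightarrow> f i < f j"
    using enum_nat[OF finK] by blast
  define m where "m = card K"
  define e where "e = (\<lambda>j. inv_into I P' (f j))"
  have fK: "f j \<in> K" if "j < m" for j using f(1) that by (auto simp: bij_betw_def m_def)
  have eI: "e j \<in> I" if "j < m" for j
    using fK[OF that] by (auto simp: e_def K_def inv_into_into)
  have Pe: "P' (e j) = f j" if "j < m" for j
    using fK[OF that] by (auto simp: e_def K_def f_inv_into_f)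
  define a where "a = (\<lambda>j. fst (e j))"
  define b where "b = (\<lambda>j. snd (e j))"
  have ab: "(a j, b j) = e j" for j by (simp add: a_def b_def)
  have abI: "(a j, b j) \<in> I" if "j < m" for j using eI[OF that] ab[of j] by simp
  have img: "S = (\<lambda>j. L (a j) (b j)) ` {..<m}"
  proof
    show "S \<subseteq> (\<lambda>j. L (a j) (b j)) ` {..<m}"
    proof
      fix s assume "s \<in> S"
      then obtain k i where ki: "(k,i) \<in> I" "s = L k i" using SI by auto
      have "P' (k,i) \<in> K" using ki K_def by auto
      hence "P' (k,i) \<in> f ` {..<m}" using f(1) unfolding m_def bij_betw_def by simp
      then obtain j0 where j0: "j0 \<in> {..<m}" "P' (k,i) = f j0" by (rule imageE)
      hence j: "j0 < m" "f j0 = P' (k,i)" by simp_all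
      have "e j0 = (k,i)" unfolding e_def j(2) using injP ki(1) by (simp add: inv_into_f_f)
      hence "s = L (a j0) (b j0)" using ki ab[of j0] by simp
      thus "s \<in> (\<lambda>j. L (a j) (b j)) ` {..<m}" using j by auto
    qed
    show "(\<lambda>j. L (a j) (b j)) ` {..<m} \<subseteq> S"
    proof
      fix s assume "s \<in> (\<lambda>j. L (a j) (b j)) ` {..<m}"
      then obtain j where j: "j < m" "s = L (a j) (b j)" by auto
      show "s \<in> S" using abI[OF j(1)] j(2) by (simp add: I_def)
    qed
  qed
  have lt: "\<forall>i j. i<j \<and> j<m \<longrightarrow> P (a i) (b i) < P (a j) (b j)"
  proof (intro allI impI)
    fix i j assume "i<j \<and> j<m"
    thus "P (a i) (b i) < P (a j) (b j)"
      using Pe[of i] Pe[of j] f(2) ab[of i] ab[of j] unfolding m_def P'_def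
      by (metis case_prod_conv order.strict_trans)
  qed
  have bd: "\<forall>j<m. a j < d \<and> b j < d"
    using abI by (simp add: I_def)
  have "inj_on (\<lambda>j. L (a j) (b j)) {..<m}"
  proof (rule inj_onI)
    fix i j assume h: "i \<in> {..<m}" "j \<in> {..<m}" "L (a i) (b i) = L (a j) (b j)"
    hence "a i = a j \<and> b i = b j" using Linj bd by blast
    thus "i = j" using lt h(1,2) by (metis lessThan_iff less_irrefl linorder_neqE_nat)
  qed
  hence "card S = m" using img card_image by fastforce
  with img lt bd show ?thesis by blast
qed

lemma extend_bij:
  fixes a b :: "nat \<Rightarrow> nat"
  assumes "inj_on a M" "inj_on b M" "a ` M \<subseteq> D" "b ` M \<subseteq> D" "finite D"
  shows "\<exists>\<sigma>. bij_betw \<sigma> D D \<and> (\<forall>j\<in>M. \<sigma> (a j) = b j)"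
proof -
  define g where "g = (\<lambda>x. b (inv_into M a x))"
  have finM: "finite M" using assms(1,3,5) finite_imageD finite_subset by blast
  have g1: "bij_betw g (a ` M) (b ` M)"
  proof -
    have "bij_betw (inv_into M a) (a ` M) M" using assms(1) by (simp add: bij_betw_inv_into inj_on_imp_bij_betw)
    moreover have "bij_betw b M (b ` M)" using assms(2) by (simp add: inj_on_imp_bij_betw)
    ultimately have "bij_betw (b \<circ> inv_into M a) (a ` M) (b ` M)" by (rule bij_betw_trans)
    moreover have "g = b \<circ> inv_into M a" by (simp add: g_def fun_eq_iff)
    ultimately show ?thesis by simp
  qed
  have "card (D - a ` M) = card (D - b ` M)"
    using assms finM by (simp add: card_Diff_subset card_image)
  then obtain h where h: "bij_betw h (D - a ` M) (D - b ` M)"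
    using finite_same_card_bij assms(5) by blast
  define \<sigma> where "\<sigma> = (\<lambda>x. if x \<in> a ` M then g x else h x)"
  have s1: "bij_betw \<sigma> (a ` M) (b ` M)" using g1 by (rule bij_betw_cong[THEN iffD1, rotated]) (simp add: \<sigma>_def)
  have s2: "bij_betw \<sigma> (D - a ` M) (D - b ` M)" using h by (rule bij_betw_cong[THEN iffD1, rotated]) (simp add: \<sigma>_def)
  have "bij_betw \<sigma> (a ` M \<union> (D - a ` M)) (b ` M \<union> (D - b ` M))"
    by (rule bij_betw_combine[OF s1 s2]) auto
  moreover have "a ` M \<union> (D - a ` M) = D" "b ` M \<union> (D - b ` M) = D" using assms by auto
  ultimately have "bij_betw \<sigma> D D" by simp
  moreover have "\<forall>j\<in>M. \<sigma> (a j) = b j" using assms(1) by (simp add: \<sigma>_def g_def)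
  ultimately show ?thesis by blast
qed



lemma famA:
  fixes L :: "nat \<Rightarrow> nat \<Rightarrow> 'a set"
  assumes dj: "\<And>k i k' i'. k<d \<Longrightarrow> i<d \<Longrightarrow> k'<d \<Longrightarrow> i'<d \<Longrightarrow>
        disjnt (L k i) (L k' i') \<longleftrightarrow> k \<noteq> k' \<and> i \<noteq> i'"
    and Linj: "\<And>k i k' i'. k<d \<Longrightarrow> i<d \<Longrightarrow> k'<d \<Longrightarrow> i'<d \<Longrightarrow> L k i = L k' i' \<Longrightarrow> k = k' \<and> i = i'"
    and sub: "S \<subseteq> {L k i | k i. k < d \<and> i < d}"
  shows "pairwise disjnt S \<longleftrightarrow>
      (\<exists>m a b. S = (\<lambda>j. L (a j) (b j)) ` {..<m}
        \<and> card S = m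
        \<and> (\<forall>i j. i < j \<and> j < m \<longrightarrow> a i < a j)
        \<and> (\<forall>j<m. a j \<le> d - 1)
        \<and> (\<exists>\<sigma>. bij_betw \<sigma> {..<d} {..<d} \<and> (\<forall>j<m. \<sigma> (a j) = b j)))"
proof
  assume pw: "pairwise disjnt S"
  have Pd: "k \<noteq> k'" if "k<d" "i<d" "k'<d" "i'<d" "L k i \<in> S" "L k' i' \<in> S" "(k,i) \<noteq> (k',i')" for k i k' i'
  proof -
    have "L k i \<noteq> L k' i'" using Linj that by blast
    hence "disjnt (L k i) (L k' i')" using pw that unfolding pairwise_def by blast
    thus ?thesis using dj that by blast
  qed
  obtain m a b where mab: "S = (\<lambda>j. L (a j) (b j)) ` {..<m}" "card S = m"
     "\<forall>i j. i<j \<and> j<m \<longrightarrow> a i < a j" "\<forall>j<m. a j < d \<and> b j < d"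
  proof -
    have "\<exists>m a b. S = (\<lambda>j. L (a j) (b j)) ` {..<m} \<and> card S = m
     \<and> (\<forall>i j. i<j \<and> j<m \<longrightarrow> (\<lambda>k i. k) (a i) (b i) < (\<lambda>k i. k) (a j) (b j)) \<and> (\<forall>j<m. a j < d \<and> b j < d)"
      apply (rule enum_gen[where P="\<lambda>k i. k"])
        apply (rule sub)
       apply (rule Pd; assumption)
      apply (rule Linj; assumption)
      done
    thus ?thesis using that by auto
  qed
  have ia: "inj_on a {..<m}"
    by (rule inj_onI) (metis mab(3) lessThan_iff less_irrefl linorder_neqE_nat)
  have ib: "inj_on b {..<m}"
  proof (rule inj_onI)
    fix i j assume h: "i \<in> {..<m}" "j \<in> {..<m}" "b i = b j"
    show "i = j"
    proof (rule ccontr)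
      assume "i \<noteq> j"
      hence "a i \<noteq> a j" using ia h by (meson inj_on_contraD)
      hence "L (a i) (b i) \<noteq> L (a j) (b j)" using Linj mab(4) h by blast
      moreover have "L (a i) (b i) \<in> S" "L (a j) (b j) \<in> S" using mab(1) h(1,2) by auto
      ultimately have "disjnt (L (a i) (b i)) (L (a j) (b j))" using pw unfolding pairwise_def by blast
      thus False using dj mab(4) h by auto
    qed
  qed
  obtain \<sigma> where "bij_betw \<sigma> {..<d} {..<d}" "\<forall>j\<in>{..<m}. \<sigma> (a j) = b j"
    using extend_bij[OF ia ib] mab(4) by (metis finite_lessThan image_subsetI lessThan_iff)
  thus "\<exists>m a b. S = (\<lambda>j. L (a j) (b j)) ` {..<m}
        \<and> card S = m
        \<and> (\<forall>i j. i < j \<and> j < m \<longrightarrow> a i < a j)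
        \<and> (\<forall>j<m. a j \<le> d - 1)
        \<and> (\<exists>\<sigma>. bij_betw \<sigma> {..<d} {..<d} \<and> (\<forall>j<m. \<sigma> (a j) = b j))"
    using mab by (intro exI[of _ m] exI[of _ a] exI[of _ b]) auto
next
  assume "\<exists>m a b. S = (\<lambda>j. L (a j) (b j)) ` {..<m}
        \<and> card S = m
        \<and> (\<forall>i j. i < j \<and> j < m \<longrightarrow> a i < a j)
        \<and> (\<forall>j<m. a j \<le> d - 1)
        \<and> (\<exists>\<sigma>. bij_betw \<sigma> {..<d} {..<d} \<and> (\<forall>j<m. \<sigma> (a j) = b j))"
  then obtain m a b \<sigma> where h: "S = (\<lambda>j. L (a j) (b j)) ` {..<m}" "card S = m"
        "\<forall>i j. i < j \<and> j < m \<longrightarrow> a i < a j" "\<forall>j<m. a j \<le> d - 1"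
        "bij_betw \<sigma> {..<d} {..<d}" "\<forall>j<m. \<sigma> (a j) = b j" by (elim exE conjE) (rule that; assumption)
  have ad: "a j < d" if "j < m" for j
  proof -
    have "L (a j) (b j) \<in> S" using h(1) that by blast
    hence "d > 0" using sub by auto
    thus ?thesis using h(4) that by fastforce
  qed
  have bd: "b j < d" if "j < m" for j
    using h(5,6) ad[OF that] that by (metis bij_betwE lessThan_iff)
  show "pairwise disjnt S"
    unfolding pairwise_def
  proof (intro ballI impI)
    fix s t assume st: "s \<in> S" "t \<in> S" "s \<noteq> t"
    then obtain i j where ij: "i < m" "j < m" "s = L (a i) (b i)" "t = L (a j) (b j)" using h(1) by auto
    have "i \<noteq> j" using ij st by auto
    hence "a i \<noteq> a j" using h(3) ij by (metis less_irrefl linorder_neqE_nat)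
    moreover have "b i \<noteq> b j"
      using calculation h(5,6) ij ad by (metis bij_betw_def inj_on_def lessThan_iff)
    ultimately show "disjnt s t" using dj ij ad bd by simp
  qed
qed

lemma famB:
  fixes L :: "nat \<Rightarrow> nat \<Rightarrow> 'a set"
  assumes dj: "\<And>k i k' i'. k<d \<Longrightarrow> i<d \<Longrightarrow> k'<d \<Longrightarrow> i'<d \<Longrightarrow>
        disjnt (L k i) (L k' i') \<longleftrightarrow> (k + i) mod d \<noteq> (k' + i') mod d \<and> i \<noteq> i'"
    and Linj: "\<And>k i k' i'. k<d \<Longrightarrow> i<d \<Longrightarrow> k'<d \<Longrightarrow> i'<d \<Longrightarrow> L k i = L k' i' \<Longrightarrow> k = k' \<and> i = i'"
    and sub: "S \<subseteq> {L k i | k i. k < d \<and> i < d}"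
  shows "pairwise disjnt S \<longleftrightarrow>
      (\<exists>m a b. S = (\<lambda>j. L (a j) (b j)) ` {..<m}
        \<and> card S = m
        \<and> (\<forall>i j. i < j \<and> j < m \<longrightarrow> b i < b j)
        \<and> (\<forall>j<m. a j \<le> d - 1 \<and> b j \<le> d - 1)
        \<and> inj_on (phi_plus d) ((\<lambda>j. (a j, b j)) ` {..<m}))"
proof
  assume pw: "pairwise disjnt S"
  have Pd: "i \<noteq> i'" if "k<d" "i<d" "k'<d" "i'<d" "L k i \<in> S" "L k' i' \<in> S" "(k,i) \<noteq> (k',i')" for k i k' i'
  proof -
    have "L k i \<noteq> L k' i'" using Linj that by blast
    hence "disjnt (L k i) (L k' i')" using pw that unfolding pairwise_def by blast
    thus ?thesis using dj that by blast
  qed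
  obtain m a b where mab: "S = (\<lambda>j. L (a j) (b j)) ` {..<m}" "card S = m"
     "\<forall>i j. i<j \<and> j<m \<longrightarrow> b i < b j" "\<forall>j<m. a j < d \<and> b j < d"
  proof -
    have "\<exists>m a b. S = (\<lambda>j. L (a j) (b j)) ` {..<m} \<and> card S = m
     \<and> (\<forall>i j. i<j \<and> j<m \<longrightarrow> (\<lambda>k i. i) (a i) (b i) < (\<lambda>k i. i) (a j) (b j)) \<and> (\<forall>j<m. a j < d \<and> b j < d)"
      apply (rule enum_gen[where P="\<lambda>k i. i"])
        apply (rule sub)
       apply (rule Pd; assumption)
      apply (rule Linj; assumption)
      done
    thus ?thesis using that by auto
  qed
  have ib: "inj_on b {..<m}"
    by (rule inj_onI) (metis mab(3) lessThan_iff less_irrefl linorder_neqE_nat)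
  have ip: "inj_on (phi_plus d) ((\<lambda>j. (a j, b j)) ` {..<m})"
  proof (rule inj_onI)
    fix p q assume pq: "p \<in> (\<lambda>j. (a j, b j)) ` {..<m}" "q \<in> (\<lambda>j. (a j, b j)) ` {..<m}"
      "phi_plus d p = phi_plus d q"
    then obtain i j where ij: "i < m" "j < m" "p = (a i, b i)" "q = (a j, b j)" by auto
    show "p = q"
    proof (cases "i = j")
      case True thus ?thesis using ij by simp
    next
      case False
      hence "b i \<noteq> b j" using ib ij by (meson inj_on_contraD lessThan_iff)
      hence "L (a i) (b i) \<noteq> L (a j) (b j)" using Linj mab(4) ij by blast
      moreover have "L (a i) (b i) \<in> S" "L (a j) (b j) \<in> S" using mab(1) ij by auto
      ultimately have "disjnt (L (a i) (b i)) (L (a j) (b j))" using pw unfolding pairwise_def by blast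
      hence "(a i + b i) mod d \<noteq> (a j + b j) mod d" using dj mab(4) ij by auto
      with pq(3) show ?thesis using ij by (simp add: phi_plus_def add.commute)
    qed
  qed
  show "\<exists>m a b. S = (\<lambda>j. L (a j) (b j)) ` {..<m}
        \<and> card S = m
        \<and> (\<forall>i j. i < j \<and> j < m \<longrightarrow> b i < b j)
        \<and> (\<forall>j<m. a j \<le> d - 1 \<and> b j \<le> d - 1)
        \<and> inj_on (phi_plus d) ((\<lambda>j. (a j, b j)) ` {..<m})"
    using mab ip by (intro exI[of _ m] exI[of _ a] exI[of _ b]) auto
next
  assume "\<exists>m a b. S = (\<lambda>j. L (a j) (b j)) ` {..<m}
        \<and> card S = m
        \<and> (\<forall>i j. i < j \<and> j < m \<longrightarrow> b i < b j)
        \<and> (\<forall>j<m. a j \<le> d - 1 \<and> b j \<le> d - 1)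
        \<and> inj_on (phi_plus d) ((\<lambda>j. (a j, b j)) ` {..<m})"
  then obtain m a b where h: "S = (\<lambda>j. L (a j) (b j)) ` {..<m}" "card S = m"
        "\<forall>i j. i < j \<and> j < m \<longrightarrow> b i < b j" "\<forall>j<m. a j \<le> d - 1 \<and> b j \<le> d - 1"
        "inj_on (phi_plus d) ((\<lambda>j. (a j, b j)) ` {..<m})" by (elim exE conjE) (rule that; assumption)
  have abd: "a j < d \<and> b j < d" if "j < m" for j
  proof -
    have "L (a j) (b j) \<in> S" using h(1) that by blast
    hence "d > 0" using sub by auto
    thus ?thesis using h(4) that by fastforce
  qed
  show "pairwise disjnt S"
    unfolding pairwise_def
  proof (intro ballI impI)
    fix s t assume st: "s \<in> S" "t \<in> S" "s \<noteq> t"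
    then obtain i j where ij: "i < m" "j < m" "s = L (a i) (b i)" "t = L (a j) (b j)" using h(1) by auto
    have "i \<noteq> j" using ij st by auto
    hence bij: "b i \<noteq> b j" using h(3) ij by (metis less_irrefl linorder_neqE_nat)
    have "phi_plus d (a i, b i) \<noteq> phi_plus d (a j, b j)"
    proof
      assume "phi_plus d (a i, b i) = phi_plus d (a j, b j)"
      hence "(a i, b i) = (a j, b j)" using h(5) ij by (auto dest: inj_onD)
      thus False using bij by simp
    qed
    hence "(a i + b i) mod d \<noteq> (a j + b j) mod d" by (simp add: phi_plus_def add.commute)
    thus "disjnt s t" using dj ij abd bij by simp
  qed
qed



lemma mod_cancel_lt:
  fixes k k' i d :: nat
  assumes "k < d" "k' < d" "(k + i) mod d = (k' + i) mod d"
  shows "k = k'"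
proof -
  have A: "k = k'" if "k \<le> k'" "k < d" "k' < d" "(k + i) mod d = (k' + i) mod d" for k k' :: nat
  proof -
    have "d dvd (k' + i) - (k + i)" using that mod_eq_dvd_iff_nat[of "k+i" "k'+i" d] by simp
    hence "d dvd k' - k" by simp
    moreover have "k' - k < d" using that by simp
    ultimately have "k' - k = 0" using dvd_imp_le by force
    thus ?thesis using that by simp
  qed
  show ?thesis
  proof (cases "k \<le> k'")
    case True thus ?thesis using A[of k k'] assms by simp
  next
    case False thus ?thesis using A[of k' k] assms by simp
  qed
qed

theorem corollary2p4:
  fixes d :: nat and \<eta> v :: complex and C :: "pt set set"
  assumes "d \<ge> 3"
    and "\<eta> ^ d = 1" and "\<forall>j. 0 < j \<and> j < d \<longrightarrow> \<eta> ^ j \<noteq> 1"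
    and "v ^ d = -1"
    and "C \<subseteq> fam0 d \<eta> \<union> fam1 d \<eta> \<union> fam2 d \<eta> v"
  shows
   "(pairwise disjnt (C \<inter> fam0 d \<eta>) \<longleftrightarrow>
      (\<exists>m a b. C \<inter> fam0 d \<eta> = (\<lambda>j. line0 \<eta> (a j) (b j)) ` {..<m}
        \<and> card (C \<inter> fam0 d \<eta>) = m
        \<and> (\<forall>i j. i < j \<and> j < m \<longrightarrow> a i < a j)
        \<and> (\<forall>j<m. a j \<le> d - 1)
        \<and> (\<exists>\<sigma>. bij_betw \<sigma> {..<d} {..<d} \<and> (\<forall>j<m. \<sigma> (a j) = b j))))
    \<and> (pairwise disjnt (C \<inter> fam1 d \<eta>) \<longleftrightarrow>
      (\<exists>m a b. C \<inter> fam1 d \<eta> = (\<lambda>j. line1 \<eta> (a j) (b j)) ` {..<m}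
        \<and> card (C \<inter> fam1 d \<eta>) = m
        \<and> (\<forall>i j. i < j \<and> j < m \<longrightarrow> b i < b j)
        \<and> (\<forall>j<m. a j \<le> d - 1 \<and> b j \<le> d - 1)
        \<and> inj_on (phi_plus d) ((\<lambda>j. (a j, b j)) ` {..<m})))
    \<and> (pairwise disjnt (C \<inter> fam2 d \<eta> v) \<longleftrightarrow>
      (\<exists>m a b. C \<inter> fam2 d \<eta> v = (\<lambda>j. line2 \<eta> v (a j) (b j)) ` {..<m}
        \<and> card (C \<inter> fam2 d \<eta> v) = m
        \<and> (\<forall>i j. i < j \<and> j < m \<longrightarrow> b i < b j)
        \<and> (\<forall>j<m. a j \<le> d - 1 \<and> b j \<le> d - 1)
        \<and> inj_on (phi_plus d) ((\<lambda>j. (a j, b j)) ` {..<m})))"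
proof -
  have d0: "d > 0" using assms(1) by simp
  have pe: "\<eta> ^ x = \<eta> ^ y \<longleftrightarrow> x mod d = y mod d" for x y
    using pow_eq_iff[OF d0 assms(2,3)] .
  have v0: "v \<noteq> 0"
  proof
    assume "v = 0"
    hence "v ^ d = 0" using d0 by simp
    with assms(4) show False by simp
  qed
  have P0: "pairwise disjnt (C \<inter> fam0 d \<eta>) \<longleftrightarrow>
      (\<exists>m a b. C \<inter> fam0 d \<eta> = (\<lambda>j. line0 \<eta> (a j) (b j)) ` {..<m}
        \<and> card (C \<inter> fam0 d \<eta>) = m
        \<and> (\<forall>i j. i < j \<and> j < m \<longrightarrow> a i < a j)
        \<and> (\<forall>j<m. a j \<le> d - 1)
        \<and> (\<exists>\<sigma>. bij_betw \<sigma> {..<d} {..<d} \<and> (\<forall>j<m. \<sigma> (a j) = b j)))"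
  proof (rule famA)
    fix k i k' i' :: nat assume "k<d" "i<d" "k'<d" "i'<d"
    thus "disjnt (line0 \<eta> k i) (line0 \<eta> k' i') \<longleftrightarrow> k \<noteq> k' \<and> i \<noteq> i'"
      by (simp add: disj0 pe)
  next
    fix k i k' i' :: nat assume "k<d" "i<d" "k'<d" "i'<d" "line0 \<eta> k i = line0 \<eta> k' i'"
    thus "k = k' \<and> i = i'" using inj0[of \<eta> k i k' i'] by (simp add: pe)
  next
    show "C \<inter> fam0 d \<eta> \<subseteq> {line0 \<eta> k i | k i. k < d \<and> i < d}" by (auto simp: fam0_def)
  qed
  have P1: "pairwise disjnt (C \<inter> fam1 d \<eta>) \<longleftrightarrow>
      (\<exists>m a b. C \<inter> fam1 d \<eta> = (\<lambda>j. line1 \<eta> (a j) (b j)) ` {..<m}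
        \<and> card (C \<inter> fam1 d \<eta>) = m
        \<and> (\<forall>i j. i < j \<and> j < m \<longrightarrow> b i < b j)
        \<and> (\<forall>j<m. a j \<le> d - 1 \<and> b j \<le> d - 1)
        \<and> inj_on (phi_plus d) ((\<lambda>j. (a j, b j)) ` {..<m}))"
  proof (rule famB)
    fix k i k' i' :: nat assume "k<d" "i<d" "k'<d" "i'<d"
    thus "disjnt (line1 \<eta> k i) (line1 \<eta> k' i') \<longleftrightarrow> (k + i) mod d \<noteq> (k' + i') mod d \<and> i \<noteq> i'"
      by (simp add: disj1 pe)
  next
    fix k i k' i' :: nat assume h: "k<d" "i<d" "k'<d" "i'<d" "line1 \<eta> k i = line1 \<eta> k' i'"
    have hh: "(k + i) mod d = (k' + i') mod d \<and> i mod d = i' mod d"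
      using inj1[OF h(5)] unfolding pe .
    hence ii: "i = i'" using h by simp
    hence "(k + i) mod d = (k' + i) mod d" using hh by simp
    hence "k = k'" using mod_cancel_lt h(1,3) by blast
    thus "k = k' \<and> i = i'" using ii by simp
  next
    show "C \<inter> fam1 d \<eta> \<subseteq> {line1 \<eta> k i | k i. k < d \<and> i < d}" by (auto simp: fam1_def)
  qed
  have P2: "pairwise disjnt (C \<inter> fam2 d \<eta> v) \<longleftrightarrow>
      (\<exists>m a b. C \<inter> fam2 d \<eta> v = (\<lambda>j. line2 \<eta> v (a j) (b j)) ` {..<m}
        \<and> card (C \<inter> fam2 d \<eta> v) = m
        \<and> (\<forall>i j. i < j \<and> j < m \<longrightarrow> b i < b j)
        \<and> (\<forall>j<m. a j \<le> d - 1 \<and> b j \<le> d - 1)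
        \<and> inj_on (phi_plus d) ((\<lambda>j. (a j, b j)) ` {..<m}))"
  proof (rule famB)
    fix k i k' i' :: nat assume "k<d" "i<d" "k'<d" "i'<d"
    thus "disjnt (line2 \<eta> v k i) (line2 \<eta> v k' i') \<longleftrightarrow> (k + i) mod d \<noteq> (k' + i') mod d \<and> i \<noteq> i'"
      by (simp add: disj2[OF v0] pe)
  next
    fix k i k' i' :: nat assume h: "k<d" "i<d" "k'<d" "i'<d" "line2 \<eta> v k i = line2 \<eta> v k' i'"
    have hh: "(k + i) mod d = (k' + i') mod d \<and> i mod d = i' mod d"
      using inj2[OF v0 h(5)] unfolding pe .
    hence ii: "i = i'" using h by simp
    hence "(k + i) mod d = (k' + i) mod d" using hh by simp
    hence "k = k'" using mod_cancel_lt h(1,3) by blast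
    thus "k = k' \<and> i = i'" using ii by simp
  next
    show "C \<inter> fam2 d \<eta> v \<subseteq> {line2 \<eta> v k i | k i. k < d \<and> i < d}" by (auto simp: fam2_def)
  qed
  show ?thesis using P0 P1 P2 by blast
qed


end
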